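(* Let $p$ be an indecomposable permutation avoiding $3241$ and $4321$ that contains the pattern $321$, with associated triple $(a,b,c)$. If $c$ is finite, then $c>b$.
   Context: Permutations of $[n]$ are in one-line notation; pattern containment/avoidance is in the usual classical sense. Indecomposable: no $k$ with $1\le k\le n-1$ and $\{p_1,\dots,p_k\}=\{1,\dots,k\}$. An entry is a left-to-right maximum (LRMax) if it exceeds all entries to its left. For a $321$-containing permutation $p$, the associated triple $(a,b,c)$ is: $a$ is the rightmost entry of $p$ that plays the role of the "1" in some occurrence of $321$; $b$ is the rightmost entry to the left of $a$ that exceeds $a$; $c$ is the first entry to the right of $a$ that is not a LRMax, with $c=\infty$ if no such entry exists. *)

theory Defs
  imports Main
begin

text \<open>Permutations of [n] in one-line notation, as lists p = [p_1, ..., p_n]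
  (0-based list positions).\<close>

definition is_perm :: "nat list \<Rightarrow> bool" where
  "is_perm p \<longleftrightarrow> distinct p \<and> set p = {1..length p}"

definition contains :: "nat list \<Rightarrow> nat list \<Rightarrow> bool" where
  "contains p q \<longleftrightarrow> (\<exists>idx :: nat list. length idx = length q \<and> sorted_wrt (<) idx \<and>
     (\<forall>i\<in>set idx. i < length p) \<and>
     (\<forall>i<length q. \<forall>j<length q. (p ! (idx ! i) < p ! (idx ! j) \<longleftrightarrow> q ! i < q ! j)))"

definition avoids :: "nat list \<Rightarrow> nat list \<Rightarrow> bool" where
  "avoids p q \<longleftrightarrow> \<not> contains p q"

definition indecomposable :: "nat list \<Rightarrow> bool" where
  "indecomposable p \<longleftrightarrow>
     \<not> (\<exists>k. 1 \<le> k \<and> k \<le> length p - 1 \<and> set (take k p) = {1..k})"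

definition a_pos :: "nat list \<Rightarrow> nat" where
  "a_pos p = Max {i. i < length p \<and> (\<exists>j k. j < k \<and> k < i \<and> p ! j > p ! k \<and> p ! k > p ! i)}"

definition b_pos :: "nat list \<Rightarrow> nat" where
  "b_pos p = Max {j. j < a_pos p \<and> p ! j > p ! a_pos p}"

definition is_LRMax :: "nat list \<Rightarrow> nat \<Rightarrow> bool" where
  "is_LRMax p m \<longleftrightarrow> (\<forall>l<m. p ! l < p ! m)"

definition triple_a :: "nat list \<Rightarrow> nat" where
  "triple_a p = p ! a_pos p"

definition triple_b :: "nat list \<Rightarrow> nat" where
  "triple_b p = p ! b_pos p"

text \<open>c: first entry right of a that is not a LRMax; None encodes c = \<infinity>.\<close>
definition triple_c :: "nat list \<Rightarrow> nat option" where
  "triple_c p = (let S = {m. a_pos p < m \<and> m < length p \<and> \<not> is_LRMax p m} in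
     if S = {} then None else Some (p ! Min S))"

end

theory Submission
  imports Defs
begin

lemma A_nonempty:
  assumes "contains p [3,2,1]"
  shows "\<exists>i. i < length p \<and> (\<exists>j k. j < k \<and> k < i \<and> p ! j > p ! k \<and> p ! k > p ! i)"
proof -
  obtain idx where L: "length idx = 3" and S: "sorted_wrt (<) idx"
    and B: "\<forall>i\<in>set idx. i < length p"
    and O: "\<forall>i<3. \<forall>j<3. (p ! (idx ! i) < p ! (idx ! j) \<longleftrightarrow> [3,2,1::nat] ! i < [3,2,1::nat] ! j)"
    using assms unfolding contains_def by (metis length_Cons list.size(3) numeral_3_eq_3 One_nat_def)
  have s01: "idx!0 < idx!1" and s12: "idx!1 < idx!2"
    using S L by (auto simp: sorted_wrt_iff_nth_less)
  have "idx!2 < length p" using B L by (simp add: nth_mem)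
  moreover have "p!(idx!1) < p!(idx!0)" using O[rule_format, of 1 0] by simp
  moreover have "p!(idx!2) < p!(idx!1)" using O[rule_format, of 2 1] by simp
  ultimately show ?thesis using s01 s12 by blast
qed

lemma contains4:
  assumes "j < k" "k < l" "l < i" "i < length p"
    and "p!i < p!k" "p!k < p!j" "p!j < p!l"
  shows "contains p [3,2,4,1]"
  unfolding contains_def
proof (intro exI[of _ "[j,k,l,i]"] conjI)
  show "\<forall>x<length [3, 2, 4, 1::nat]. \<forall>y<length [3, 2, 4, 1::nat].
     (p ! ([j, k, l, i] ! x) < p ! ([j, k, l, i] ! y)) = ([3, 2, 4, 1::nat] ! x < [3, 2, 4, 1] ! y)"
  proof (intro allI impI)
    fix x y :: nat assume "x < length [3, 2, 4, 1::nat]" "y < length [3, 2, 4, 1::nat]"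
    hence "x \<in> {0,1,2,3}" "y \<in> {0,1,2,3}" by auto
    then show "(p ! ([j, k, l, i] ! x) < p ! ([j, k, l, i] ! y)) = ([3, 2, 4, 1::nat] ! x < [3, 2, 4, 1] ! y)"
      using assms by (elim insertE; simp)+
  qed
qed (use assms in auto)

theorem corollary5:
  fixes p :: "nat list" and c :: nat
  assumes "is_perm p"
    and "indecomposable p"
    and "avoids p [3,2,4,1]"
    and "avoids p [4,3,2,1]"
    and "contains p [3,2,1]"
    and "triple_c p = Some c"
  shows "c > triple_b p"
proof -
  define A where "A = {i. i < length p \<and> (\<exists>j k. j < k \<and> k < i \<and> p ! j > p ! k \<and> p ! k > p ! i)}"
  have finA: "finite A" unfolding A_def by auto
  have neA: "A \<noteq> {}" using A_nonempty[OF assms(5)] unfolding A_def by auto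
  have ia: "a_pos p \<in> A" unfolding a_pos_def A_def[symmetric] using finA neA by (rule Max_in)
  define i where "i = a_pos p"
  have maxA: "\<And>x. x \<in> A \<Longrightarrow> x \<le> i" unfolding i_def a_pos_def A_def[symmetric] using finA by simp
  from ia obtain j k where jk: "j < k" "k < i" "p!j > p!k" "p!k > p!i" and il: "i < length p"
    unfolding A_def i_def by auto
  define Bs where "Bs = {j. j < a_pos p \<and> p ! j > p ! a_pos p}"
  have finB: "finite Bs" unfolding Bs_def by auto
  have kB: "k \<in> Bs" unfolding Bs_def using jk i_def by auto
  have jbB: "b_pos p \<in> Bs" unfolding b_pos_def Bs_def[symmetric] using finB kB by (intro Max_in) auto
  define jb where "jb = b_pos p"
  have maxB: "\<And>x. x \<in> Bs \<Longrightarrow> x \<le> jb" unfolding jb_def b_pos_def Bs_def[symmetric] using finB by simp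
  have jb: "jb < i" "p!jb > p!i" using jbB unfolding Bs_def jb_def i_def by auto
  have kjb: "k \<le> jb" using maxB[OF kB] .
  define S where "S = {m. a_pos p < m \<and> m < length p \<and> \<not> is_LRMax p m}"
  have neS: "S \<noteq> {}" and c: "c = p ! Min S" using assms(6) unfolding triple_c_def S_def[symmetric]
    by (auto simp: Let_def split: if_splits)
  have finS: "finite S" unfolding S_def by auto
  define m where "m = Min S"
  have mS: "m \<in> S" unfolding m_def using finS neS by (rule Min_in)
  hence m: "i < m" "m < length p" unfolding S_def i_def by auto
  have notA: "\<And>x y. x < y \<Longrightarrow> y < m \<Longrightarrow> p!x > p!y \<Longrightarrow> p!y > p!m \<Longrightarrow> False"
  proof -
    fix x y assume "x < y" "y < m" "p!x > p!y" "p!y > p!m"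
    hence "m \<in> A" unfolding A_def using m by blast
    thus False using maxA m by fastforce
  qed
  have dist: "distinct p" using assms(1) unfolding is_perm_def by simp
  have neq: "p!m \<noteq> p!jb" using dist m jb il by (simp add: nth_eq_iff_index_eq)
  show ?thesis
  proof (rule ccontr)
    assume "\<not> c > triple_b p"
    hence cb: "p!m < p!jb" using neq unfolding c triple_b_def m_def[symmetric] jb_def[symmetric] by simp
    have pk: "p!k < p!m"
    proof (rule ccontr)
      assume "\<not> p!k < p!m"
      moreover have "p!k \<noteq> p!m" using dist jk m by (simp add: nth_eq_iff_index_eq)
      ultimately have "p!k > p!m" by simp
      thus False using notA[of j k] jk m by auto
    qed
    have kjb': "k < jb" using kjb pk cb by (cases "k = jb") auto
    show False
    proof (cases "p!j > p!jb")
      case True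
      thus False using notA[of j jb] jk kjb' jb m cb by auto
    next
      case False
      moreover have "p!j \<noteq> p!jb" using dist jk kjb' jb il by (simp add: nth_eq_iff_index_eq)
      ultimately have "p!j < p!jb" by simp
      hence "contains p [3,2,4,1]" using contains4[of j k jb i p] jk kjb' jb il by auto
      thus False using assms(3) unfolding avoids_def by simp
    qed
  qed
qed

end
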